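(* Let $Z$ be a random real symmetric $d\times d$ Gaussian matrix such that $\operatorname{Var}[a^{\mathsf T}Za]\le\beta^2\|a\|^4$ for each $a\in\mathbb{R}^d$. Then \[ \mathbb{E}\|Z-\mathbb{E}Z\|\le\sqrt{12\beta^2d}\qquad\text{and}\qquad\sigma_*^2(Z)\le\beta^2, \] where $\sigma_*^2(Z)=\max_{\|u\|=1}\operatorname{Var}[u^{\mathsf T}Zu]$.
   Context: A random real symmetric matrix is Gaussian if its entries are jointly Gaussian. $\|\cdot\|$ on matrices is the spectral (operator) norm. *)

theory Defs
  imports "HOL-Probability.Probability"
begin

definition gaussian_rv :: "'a measure \<Rightarrow> ('a \<Rightarrow> real) \<Rightarrow> bool" where
  "gaussian_rv M X \<longleftrightarrow> X \<in> borel_measurable M \<and>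
     ((\<exists>c. AE \<omega> in M. X \<omega> = c) \<or>
      (\<exists>\<mu> \<sigma>. \<sigma> > 0 \<and> distributed M lborel X (normal_density \<mu> \<sigma>)))"

text \<open>A random matrix is Gaussian if its entries are jointly Gaussian, i.e. every
  real linear combination of its entries is a Gaussian random variable.\<close>
definition gaussian_matrix :: "'a measure \<Rightarrow> ('a \<Rightarrow> real^'n^'m) \<Rightarrow> bool" where
  "gaussian_matrix M Z \<longleftrightarrow> Z \<in> borel_measurable M \<and>
     (\<forall>c :: real^'n^'m. gaussian_rv M (\<lambda>\<omega>. \<Sum>i\<in>UNIV. \<Sum>j\<in>UNIV. c$i$j * Z \<omega> $i$j))"

definition spec_norm :: "real^'n^'m \<Rightarrow> real" where
  "spec_norm A = onorm (\<lambda>x. A *v x)"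

definition sigma_star_sq :: "'a measure \<Rightarrow> ('a \<Rightarrow> real^'n^'n) \<Rightarrow> real" where
  "sigma_star_sq M Z = (SUP u\<in>{u :: real^'n. norm u = 1}. prob_space.variance M (\<lambda>\<omega>. u \<bullet> (Z \<omega> *v u)))"

end

theory Submission
  imports Defs "HOL-Analysis.Analysis"
begin


lemma ball_fmeas: "ball (c::'a::euclidean_space) r \<in> fmeasurable lborel"
  unfolding fmeasurable_def using emeasure_lborel_ball_finite[of c r] by auto

lemma sep_card_bound:
  fixes F :: "'a::euclidean_space set" and e :: real
  assumes e: "0 < e" and fin: "finite F" and sub: "F \<subseteq> sphere 0 1"
    and sep: "\<forall>x\<in>F. \<forall>y\<in>F. x \<noteq> y \<longrightarrow> e < dist x y"
  shows "real (card F) \<le> (1 + 2/e) ^ DIM('a)"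
proof -
  define r where "r = e/2"
  have r: "r > 0" using e by (simp add: r_def)
  define V where "V = unit_ball_vol (real DIM('a))"
  have V: "V > 0" unfolding V_def by simp
  have "measure lborel (\<Union>x\<in>F. ball x r) = (\<Sum>x\<in>F. measure lborel (ball x r))"
  proof (rule measure_UNION'[OF fin])
    show "pairwise (\<lambda>i j. disjnt (ball i r) (ball j r)) F"
      unfolding pairwise_def disjnt_def
    proof (intro ballI impI)
      fix x y assume xy: "x \<in> F" "y \<in> F" "x \<noteq> y"
      then have "e < dist x y" using sep by auto
      show "ball x r \<inter> ball y r = {}"
      proof (rule ccontr)
        assume "ball x r \<inter> ball y r \<noteq> {}"
        then obtain z where z: "dist x z < r" "dist y z < r" by auto
        have "dist x y \<le> dist x z + dist y z" using dist_triangle3[of x y z] by (simp add: dist_commute)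
        then show False using z \<open>e < dist x y\<close> unfolding r_def by linarith
      qed
    qed
  qed (rule ball_fmeas)
  also have "\<dots> = real (card F) * (V * r ^ DIM('a))"
    using r by (simp add: content_ball V_def)
  finally have eq: "measure lborel (\<Union>x\<in>F. ball x r) = real (card F) * (V * r ^ DIM('a))" .
  have "(\<Union>x\<in>F. ball x r) \<subseteq> ball 0 (1 + r)"
  proof
    fix z assume "z \<in> (\<Union>x\<in>F. ball x r)"
    then obtain x where x: "x \<in> F" "dist x z < r" by auto
    have "norm x = 1" using sub x by auto
    have "norm z \<le> norm x + norm (z - x)" by (rule norm_triangle_sub)
    moreover have "norm (z - x) = dist x z" by (simp add: dist_norm norm_minus_commute)
    ultimately show "z \<in> ball 0 (1 + r)" using x \<open>norm x = 1\<close> by simp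
  qed
  then have "measure lborel (\<Union>x\<in>F. ball x r) \<le> measure lborel (ball (0::'a) (1 + r))"
    by (intro measure_mono_fmeasurable) (auto intro!: ball_fmeas borel_open)
  also have "\<dots> = V * (1 + r) ^ DIM('a)"
    using r by (simp add: content_ball V_def)
  finally have "real (card F) * (V * r ^ DIM('a)) \<le> V * (1 + r) ^ DIM('a)" using eq by simp
  then have "real (card F) * r ^ DIM('a) \<le> (1 + r) ^ DIM('a)" using V
    by (simp add: mult.left_commute)
  then have "real (card F) \<le> (1 + r) ^ DIM('a) / r ^ DIM('a)"
    using r by (simp add: field_simps)
  also have "\<dots> = ((1 + r) / r) ^ DIM('a)" by (simp add: power_divide)
  also have "(1 + r) / r = 1 + 2/e" using e by (simp add: r_def field_simps)
  finally show ?thesis .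
qed

lemma net_exists:
  fixes e :: real
  assumes e: "0 < e"
  shows "\<exists>F::'a::euclidean_space set. finite F \<and> F \<subseteq> sphere 0 1 \<and>
     real (card F) \<le> (1 + 2/e) ^ DIM('a) \<and> (\<forall>u\<in>sphere 0 1. \<exists>v\<in>F. dist u v \<le> e)"
proof -
  define sep where "sep F \<longleftrightarrow> F \<subseteq> sphere (0::'a) 1 \<and> (\<forall>x\<in>F. \<forall>y\<in>F. x \<noteq> y \<longrightarrow> e < dist x y)" for F
  define B where "B = (1 + 2/e) ^ DIM('a)"
  have BB: "B \<le> real (nat (ceiling B))" by (rule real_nat_ceiling_ge)
  have fin: "finite F" if "sep F" for F
  proof (rule ccontr)
    assume "infinite F"
    then obtain G where G: "G \<subseteq> F" "finite G" "card G = nat (ceiling B) + 1"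
      using infinite_arbitrarily_large by blast
    have "sep G" using that G(1) unfolding sep_def by blast
    then have "real (card G) \<le> B" using sep_card_bound[OF e G(2)] unfolding sep_def B_def by blast
    then have "real (nat (ceiling B) + 1) \<le> B" using G(3) by simp
    then show False using BB by simp
  qed
  have bnd: "card F \<le> nat (ceiling B)" if "sep F" for F
  proof -
    have "real (card F) \<le> B" using sep_card_bound[OF e fin[OF that]] that unfolding sep_def B_def by blast
    then have "real (card F) \<le> real (nat (ceiling B))" using BB by linarith
    then show ?thesis by (simp only: of_nat_le_iff)
  qed
  define S where "S = {card F | F. sep F}"
  have "S \<subseteq> {..nat (ceiling B)}" using bnd unfolding S_def by auto
  then have finS: "finite S" by (rule finite_subset) simp
  have "sep {}" unfolding sep_def by simp
  then have S0: "0 \<in> S" unfolding S_def by force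
  then have "Max S \<in> S" using finS by (intro Max_in) auto
  then obtain F where F: "sep F" "card F = Max S" unfolding S_def by auto
  have maxF: "card G \<le> card F" if "sep G" for G
  proof -
    have "card G \<in> S" using that unfolding S_def by blast
    then show ?thesis using Max_ge[OF finS] F(2) by simp
  qed
  have cover: "\<exists>v\<in>F. dist u v \<le> e" if u: "u \<in> sphere 0 1" for u
  proof (rule ccontr)
    assume "\<not> ?thesis"
    then have far: "\<forall>v\<in>F. e < dist u v" by auto
    then have uF: "u \<notin> F" using e by auto
    have "sep (insert u F)" using F(1) far u unfolding sep_def by (auto simp: dist_commute)
    then have "card (insert u F) \<le> card F" by (rule maxF)
    then show False using uF fin[OF F(1)] by simp
  qed
  have "real (card F) \<le> B" using sep_card_bound[OF e fin[OF F(1)]] F(1) unfolding sep_def B_def by blast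
  then show ?thesis using F(1) fin[OF F(1)] cover unfolding sep_def B_def by blast
qed




lemma sym_inner:
  fixes A :: "real^'n^'n"
  assumes "transpose A = A"
  shows "x \<bullet> (A *v y) = (A *v x) \<bullet> y"
proof -
  have "x \<bullet> (A *v y) = (x v* A) \<bullet> y" by (simp add: dot_lmul_matrix)
  also have "x v* A = transpose A *v x" by simp
  finally show ?thesis using assms by simp
qed

lemma quad_diff:
  fixes A :: "real^'n^'n"
  assumes "transpose A = A"
  shows "(u - v) \<bullet> (A *v (u + v)) = u \<bullet> (A *v u) - v \<bullet> (A *v v)"
proof -
  have "u \<bullet> (A *v v) = v \<bullet> (A *v u)"
    using sym_inner[OF assms, of u v] by (simp add: inner_commute)
  then show ?thesis
    by (simp add: matrix_vector_right_distrib inner_diff_left inner_add_right)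
qed

lemma polar:
  fixes A :: "real^'n^'n"
  assumes "transpose A = A"
  shows "4 * (x \<bullet> (A *v y)) = (x + y) \<bullet> (A *v (x + y)) - (x - y) \<bullet> (A *v (x - y))"
proof -
  have "y \<bullet> (A *v x) = x \<bullet> (A *v y)"
    using sym_inner[OF assms, of y x] by (simp add: inner_commute)
  then show ?thesis
    by (simp add: matrix_vector_right_distrib matrix_vector_mult_diff_distrib
        inner_diff_left inner_add_right inner_diff_right inner_add_left)
qed

lemma quad_net_bound:
  fixes A :: "real^'n^'n"
  assumes sym: "transpose A = A" and e: "0 \<le> e" "e < 1/2"
    and net: "\<forall>u\<in>sphere 0 1. \<exists>v\<in>F. dist u v \<le> e" and Fs: "F \<subseteq> sphere 0 1"
    and m: "\<forall>v\<in>F. \<bar>v \<bullet> (A *v v)\<bar> \<le> m"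
  shows "spec_norm A \<le> m / (1 - 2*e)"
proof -
  define N where "N = spec_norm A"
  have hN: "norm (A *v x) \<le> N * norm x" for x
    unfolding N_def spec_norm_def by (rule onorm) simp
  define K where "K = m + 2 * e * N"
  have unit: "\<bar>u \<bullet> (A *v u)\<bar> \<le> K" if u: "norm u = 1" for u
  proof -
    have "u \<in> sphere 0 1" using u by simp
    then obtain v where v: "v \<in> F" "dist u v \<le> e" using net by blast
    have nv: "norm v = 1" using v Fs by auto
    have "\<bar>u \<bullet> (A *v u) - v \<bullet> (A *v v)\<bar> = \<bar>(u - v) \<bullet> (A *v (u + v))\<bar>"
      using quad_diff[OF sym] by simp
    also have "\<dots> \<le> norm (u - v) * norm (A *v (u + v))" by (rule Cauchy_Schwarz_ineq2)
    also have "\<dots> \<le> e * (N * norm (u + v))"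
      using v(2) hN[of "u+v"] e by (intro mult_mono) (auto simp: dist_norm)
    also have "\<dots> \<le> e * (N * 2)"
    proof -
      have "norm (u + v) \<le> 2" using norm_triangle_ineq[of u v] u nv by simp
      moreover have "N \<ge> 0" unfolding N_def spec_norm_def by (rule onorm_pos_le) simp
      ultimately show ?thesis using e by (intro mult_left_mono) (auto intro: mult_left_mono)
    qed
    finally show ?thesis using m v(1) unfolding K_def by auto
  qed
  have quad: "\<bar>x \<bullet> (A *v x)\<bar> \<le> K * (norm x)^2" for x
  proof (cases "x = 0")
    case False
    define u where "u = (1 / norm x) *\<^sub>R x"
    have nu: "norm u = 1" using False by (simp add: u_def)
    have xu: "x = norm x *\<^sub>R u" using False by (simp add: u_def)
    have "x \<bullet> (A *v x) = (norm x)^2 * (u \<bullet> (A *v u))"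
      by (subst (1 2) xu) (simp add: matrix_vector_mult_scaleR power2_eq_square)
    then show ?thesis using unit[OF nu]
      by (simp add: abs_mult) (metis mult.commute mult_right_mono zero_le_power2)
  qed simp
  have "norm (A *v x) \<le> K * norm x" for x
  proof (cases "A *v x = 0")
    case True
    obtain u :: "real^'n" where "norm u = 1" using vector_choose_size[of 1] by auto
    then have "K \<ge> 0" using unit by force
    then show ?thesis using True by simp
  next
    case False
    then have x0: "x \<noteq> 0" by auto
    define y where "y = (norm x / norm (A *v x)) *\<^sub>R (A *v x)"
    have ny: "norm y = norm x" using False by (simp add: y_def)
    have "x \<bullet> (A *v y) = (A *v x) \<bullet> y" by (rule sym_inner[OF sym])
    also have "\<dots> = norm x * norm (A *v x)" using False
      by (simp add: y_def power2_norm_eq_inner[symmetric] power2_eq_square)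
    finally have xy: "x \<bullet> (A *v y) = norm x * norm (A *v x)" .
    have "4 * (norm x * norm (A *v x)) \<le> K * (norm (x+y))^2 + K * (norm (x-y))^2"
      using polar[OF sym, of x y] quad[of "x+y"] quad[of "x-y"] xy by linarith
    also have "\<dots> = K * (2 * (norm x)^2 + 2 * (norm y)^2)"
      by (simp add: power2_norm_eq_inner inner_add_left inner_add_right inner_diff_left
          inner_diff_right inner_commute algebra_simps)
    finally have "4 * (norm x * norm (A *v x)) \<le> 4 * (norm x * (K * norm x))"
      using ny by (simp add: power2_eq_square algebra_simps)
    then show ?thesis using x0 by simp
  qed
  then have "N \<le> K" unfolding N_def spec_norm_def by (intro onorm_le) auto
  then have "N * (1 - 2*e) \<le> m" unfolding K_def by (simp add: algebra_simps)
  then show ?thesis unfolding N_def[symmetric] using e by (simp add: field_simps)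
qed



lemma normal_mgf:
  fixes \<sigma> :: real
  assumes s: "\<sigma> > 0"
  shows "has_bochner_integral lborel (\<lambda>x. normal_density \<mu> \<sigma> x * exp (t * (x - \<mu>))) (exp (t\<^sup>2 * \<sigma>\<^sup>2 / 2))"
proof -
  have eq: "normal_density \<mu> \<sigma> x * exp (t * (x - \<mu>)) = exp (t\<^sup>2 * \<sigma>\<^sup>2 / 2) * normal_density (\<mu> + t * \<sigma>\<^sup>2) \<sigma> x" for x
  proof -
    have "-(x - \<mu>)\<^sup>2 / (2 * \<sigma>\<^sup>2) + t * (x - \<mu>) = t\<^sup>2 * \<sigma>\<^sup>2 / 2 + -(x - (\<mu> + t * \<sigma>\<^sup>2))\<^sup>2 / (2 * \<sigma>\<^sup>2)"
      using s by (simp add: field_simps power2_eq_square)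
    then have "exp (-(x - \<mu>)\<^sup>2 / (2 * \<sigma>\<^sup>2)) * exp (t * (x - \<mu>)) = exp (t\<^sup>2 * \<sigma>\<^sup>2 / 2) * exp (-(x - (\<mu> + t * \<sigma>\<^sup>2))\<^sup>2 / (2 * \<sigma>\<^sup>2))"
      by (simp add: exp_add[symmetric])
    then show ?thesis unfolding normal_density_def by (simp add: algebra_simps)
  qed
  have "has_bochner_integral lborel (normal_density (\<mu> + t * \<sigma>\<^sup>2) \<sigma>) 1"
    unfolding has_bochner_integral_iff using s by (intro conjI integrable_normal_density integral_normal_density)
  then have "has_bochner_integral lborel (\<lambda>x. exp (t\<^sup>2 * \<sigma>\<^sup>2 / 2) * normal_density (\<mu> + t * \<sigma>\<^sup>2) \<sigma> x) (exp (t\<^sup>2 * \<sigma>\<^sup>2 / 2) * 1)"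
    by (rule has_bochner_integral_mult_right)
  then show ?thesis by (simp add: eq)
qed

lemma gauss_mgf:
  assumes P: "prob_space M" and g: "gaussian_rv M f"
  shows "integrable M f \<and> (\<forall>t. integrable M (\<lambda>\<omega>. exp (t * (f \<omega> - prob_space.expectation M f))) \<and>
     prob_space.expectation M (\<lambda>\<omega>. exp (t * (f \<omega> - prob_space.expectation M f)))
       = exp (t\<^sup>2 * prob_space.variance M f / 2))"
proof -
  interpret prob_space M by (rule P)
  have meas[measurable]: "f \<in> borel_measurable M" using g unfolding gaussian_rv_def by auto
  consider (c) c where "AE \<omega> in M. f \<omega> = c"
    | (n) \<mu> \<sigma> where "\<sigma> > 0" "distributed M lborel f (normal_density \<mu> \<sigma>)"
    using g unfolding gaussian_rv_def by auto
  then show ?thesis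
  proof cases
    case c
    have i: "integrable M f" using c by (subst integrable_cong_AE[of f M "\<lambda>_. c"]) auto
    have E: "expectation f = c" using c by (subst integral_cong_AE[of f M "\<lambda>_. c"]) (auto simp: prob_space)
    have V: "variance f = 0" using c E by (subst integral_cong_AE[of _ M "\<lambda>_. 0"]) auto
    have "integrable M (\<lambda>\<omega>. exp (t * (f \<omega> - expectation f))) \<and>
          expectation (\<lambda>\<omega>. exp (t * (f \<omega> - expectation f))) = exp (t\<^sup>2 * variance f / 2)" for t
    proof
      show "integrable M (\<lambda>\<omega>. exp (t * (f \<omega> - expectation f)))"
        using c E by (subst integrable_cong_AE[of _ M "\<lambda>_. 1"]) auto
      show "expectation (\<lambda>\<omega>. exp (t * (f \<omega> - expectation f))) = exp (t\<^sup>2 * variance f / 2)"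
        using c E V by (subst integral_cong_AE[of _ M "\<lambda>_. 1"]) (auto simp: prob_space)
    qed
    then show ?thesis using i by blast
  next
    case n
    have E: "expectation f = \<mu>" by (rule normal_distributed_expectation[OF n])
    have V: "variance f = \<sigma>\<^sup>2" by (rule normal_distributed_variance[OF n])
    have i: "integrable M f"
      using distributed_integrable[OF n(2), of "\<lambda>x. x"] integrable_normal_moment_nz_1 n(1) by simp
    have "integrable M (\<lambda>\<omega>. exp (t * (f \<omega> - expectation f))) \<and>
          expectation (\<lambda>\<omega>. exp (t * (f \<omega> - expectation f))) = exp (t\<^sup>2 * variance f / 2)" for t
    proof
      have hb: "has_bochner_integral lborel (\<lambda>x. normal_density \<mu> \<sigma> x * exp (t * (x - \<mu>))) (exp (t\<^sup>2 * \<sigma>\<^sup>2 / 2))"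
        by (rule normal_mgf[OF n(1)])
      show "integrable M (\<lambda>\<omega>. exp (t * (f \<omega> - expectation f)))"
        using distributed_integrable[OF n(2), of "\<lambda>x. exp (t * (x - \<mu>))"] hb E
        by (simp add: has_bochner_integral_iff)
      show "expectation (\<lambda>\<omega>. exp (t * (f \<omega> - expectation f))) = exp (t\<^sup>2 * variance f / 2)"
        using distributed_integral[OF n(2), of "\<lambda>x. exp (t * (x - \<mu>))"] hb E V
        by (simp add: has_bochner_integral_iff)
    qed
    then show ?thesis using i by blast
  qed
qed


lemma quad_sum:
  fixes A :: "real^'n^'n"
  shows "v \<bullet> (A *v v) = (\<Sum>i\<in>UNIV. \<Sum>j\<in>UNIV. (v$i * v$j) * A$i$j)"
  by (simp add: inner_vec_def matrix_vector_mult_def sum_distrib_left mult_ac)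
lemma entry_sum:
  fixes A :: "real^'n^'m"
  shows "(\<Sum>k\<in>UNIV. \<Sum>l\<in>UNIV. (\<chi> k l. if k = i then (if l = j then 1 else 0) else 0) $ k $ l * A$k$l) = A$i$j"
proof -
  have m: "(if P then 1 else 0) * x = (if P then x else (0::real))" for P x by simp
  have "(\<Sum>l\<in>UNIV. (\<chi> k l. if k = i then (if l = j then 1 else 0) else 0) $ k $ l * A$k$l) = (if k = i then A$i$j else 0)" for k
    by (cases "k = i") (simp_all add: m)
  then show ?thesis by simp
qed
lemma bl_quad: "bounded_linear (\<lambda>A::real^'n^'n. v \<bullet> (A *v v))"
proof (rule linear_conv_bounded_linear[THEN iffD1], rule linearI)
  fix A B :: "real^'n^'n" and c :: real
  show "v \<bullet> ((A + B) *v v) = v \<bullet> (A *v v) + v \<bullet> (B *v v)"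
    by (simp add: matrix_vector_mult_add_rdistrib inner_add_right)
  show "v \<bullet> ((c *\<^sub>R A) *v v) = c *\<^sub>R (v \<bullet> (A *v v))"
    by (simp add: quad_sum sum_distrib_left mult_ac)
qed
lemma bl_entry: "bounded_linear (\<lambda>A::real^'n^'m. A $ i $ j)"
  using bounded_linear_compose[OF bounded_linear_vec_nth[of j] bounded_linear_vec_nth[of i]] by simp
lemma ln2: "ln (2::real) \<le> 3/4"
proof -
  have "(2::real) \<le> 1 + 3/4 + (3/4)\<^sup>2/2" by (simp add: power2_eq_square)
  also have "\<dots> \<le> exp (3/4)" by (rule exp_lower_Taylor_quadratic) simp
  finally show ?thesis by (metis ln_exp ln_le_cancel_iff exp_gt_zero zero_less_numeral)
qed

lemma int_mat:
  fixes Z :: "'a \<Rightarrow> real^'n^'m"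
  assumes Zm: "Z \<in> borel_measurable M" and intE: "\<And>i j. integrable M (\<lambda>\<omega>. Z \<omega> $ i $ j)"
  shows "integrable M Z"
proof (rule Bochner_Integration.integrable_bound)
  show "integrable M (\<lambda>\<omega>. \<Sum>i\<in>UNIV. \<Sum>j\<in>UNIV. \<bar>Z \<omega> $ i $ j\<bar>)"
    using intE by (auto intro!: integrable_sum integrable_abs)
  show "AE \<omega> in M. norm (Z \<omega>) \<le> norm (\<Sum>i\<in>UNIV. \<Sum>j\<in>UNIV. \<bar>Z \<omega> $ i $ j\<bar>)"
  proof (rule AE_I2)
    fix \<omega>
    have "norm (Z \<omega>) \<le> (\<Sum>i\<in>UNIV. norm (Z \<omega> $ i))" unfolding norm_vec_def by (rule L2_set_le_sum) simp
    also have "\<dots> \<le> (\<Sum>i\<in>UNIV. \<Sum>j\<in>UNIV. \<bar>Z \<omega> $ i $ j\<bar>)"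
      by (intro sum_mono norm_le_l1_cart)
    also have "\<dots> \<le> norm (\<Sum>i\<in>UNIV. \<Sum>j\<in>UNIV. \<bar>Z \<omega> $ i $ j\<bar>)" by simp
    finally show "norm (Z \<omega>) \<le> norm (\<Sum>i\<in>UNIV. \<Sum>j\<in>UNIV. \<bar>Z \<omega> $ i $ j\<bar>)" .
  qed
qed (rule Zm)
lemma opt_t:
  fixes x L b :: real
  assumes L: "L > 0" and b: "b \<ge> 0" and H: "\<And>t. t > 0 \<Longrightarrow> x \<le> L / t + t * b / 2"
  shows "x \<le> sqrt (2 * L * b)"
proof (cases "b = 0")
  case True
  show ?thesis
  proof (rule ccontr)
    assume "\<not> ?thesis"
    then have x: "x > 0" using True by simp
    have "x \<le> L / (2 * L / x)" using H[of "2 * L / x"] True L x by simp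
    also have "\<dots> = x / 2" using L x by (simp add: field_simps)
    finally show False using x by simp
  qed
next
  case False
  then have b0: "b > 0" using b by simp
  define s where "s = sqrt (2 * L * b)"
  have s0: "s > 0" using L b0 by (simp add: s_def)
  have ss: "s * s = 2 * L * b" using L b0 by (simp add: s_def)
  have "x \<le> L / (s / b) + (s / b) * b / 2" using H[of "s / b"] s0 b0 by simp
  also have "\<dots> = (L * b) / s + s / 2" using b0 s0 by (simp add: field_simps)
  also have "(L * b) / s = s / 2" using s0 ss by (simp add: field_simps)
  finally show ?thesis unfolding s_def by simp
qed

lemma exp_abs_le:
  fixes t y :: real
  assumes "t > 0"
  shows "exp (t * \<bar>y\<bar>) \<le> exp (t * y) + exp ((-t) * y)"
proof (cases "y \<ge> 0")
  case True
  have "0 < exp ((-t) * y)" by simp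
  then show ?thesis using True by simp
next
  case False
  have "0 < exp (t * y)" by simp
  then show ?thesis using False by simp
qed

theorem lemma5p3:
  fixes M :: "'a measure" and Z :: "'a \<Rightarrow> real^'d^'d" and \<beta> :: real
  assumes "prob_space M"
    and "gaussian_matrix M Z"
    and "\<And>\<omega>. \<omega> \<in> space M \<Longrightarrow> transpose (Z \<omega>) = Z \<omega>"
    and "\<And>a :: real^'d. prob_space.variance M (\<lambda>\<omega>. a \<bullet> (Z \<omega> *v a)) \<le> \<beta>\<^sup>2 * norm a ^ 4"
  shows "prob_space.expectation M (\<lambda>\<omega>. spec_norm (Z \<omega> - prob_space.expectation M Z))
           \<le> sqrt (12 * \<beta>\<^sup>2 * real CARD('d))
         \<and> sigma_star_sq M Z \<le> \<beta>\<^sup>2"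
proof -
  interpret prob_space M by (rule assms(1))
  note symZ = assms(3) and varb = assms(4)
  have Zm[measurable]: "Z \<in> borel_measurable M" and gZ: "\<And>c. gaussian_rv M (\<lambda>\<omega>. \<Sum>i\<in>UNIV. \<Sum>j\<in>UNIV. c$i$j * Z \<omega> $i$j)"
    using assms(2) unfolding gaussian_matrix_def by auto
  define f where "f v \<omega> = v \<bullet> (Z \<omega> *v v)" for v :: "real^'d" and \<omega>
  have gf: "gaussian_rv M (f v)" for v
  proof -
    have "(\<lambda>\<omega>. \<Sum>i\<in>UNIV. \<Sum>j\<in>UNIV. (\<chi> i j. v$i * v$j) $i$j * Z \<omega> $i$j) = f v"
      by (simp add: f_def quad_sum fun_eq_iff)
    then show ?thesis using gZ[of "\<chi> i j. v$i * v$j"] by simp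
  qed
  have gE: "gaussian_rv M (\<lambda>\<omega>. Z \<omega> $ i $ j)" for i j
  proof -
    have E: "(\<lambda>\<omega>. \<Sum>k\<in>UNIV. \<Sum>l\<in>UNIV. (\<chi> k l. if k = i then (if l = j then 1 else 0) else 0) $ k $ l * Z \<omega> $ k $ l)
       = (\<lambda>\<omega>. Z \<omega> $ i $ j)"
      by (rule ext, rule entry_sum)
    show ?thesis using gZ[of "\<chi> k l. if k = i then (if l = j then 1 else 0) else 0"] unfolding E .
  qed
  have intE: "integrable M (\<lambda>\<omega>. Z \<omega> $ i $ j)" for i j
    using gauss_mgf[OF assms(1) gE] by (rule conjunct1)
  have Zint: "integrable M Z" using int_mat[OF Zm intE] .
  define EZ where "EZ = expectation Z"
  have Ef: "expectation (f v) = v \<bullet> (EZ *v v)" for v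
    unfolding f_def EZ_def using integral_bounded_linear[OF bl_quad[of v] Zint] by simp
  have Eent: "EZ $ i $ j = expectation (\<lambda>\<omega>. Z \<omega> $ i $ j)" for i j
    unfolding EZ_def using integral_bounded_linear[OF bl_entry[of i j] Zint] by simp
  have symEZ: "transpose EZ = EZ"
  proof -
    have "EZ $ j $ i = EZ $ i $ j" for i j
    proof -
      have "expectation (\<lambda>\<omega>. Z \<omega> $ j $ i) = expectation (\<lambda>\<omega>. Z \<omega> $ i $ j)"
      proof (rule Bochner_Integration.integral_cong[OF refl])
        fix \<omega> assume "\<omega> \<in> space M"
        then have "transpose (Z \<omega>) $ i $ j = Z \<omega> $ i $ j" using symZ by simp
        then show "Z \<omega> $ j $ i = Z \<omega> $ i $ j" by (simp add: transpose_def)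
      qed
      then show ?thesis by (simp add: Eent)
    qed
    then show ?thesis by (simp add: vec_eq_iff transpose_def)
  qed
  define X where "X \<omega> = Z \<omega> - EZ" for \<omega>
  have symX: "transpose (X \<omega>) = X \<omega>" if "\<omega> \<in> space M" for \<omega>
    using symZ[OF that] symEZ by (simp add: X_def vec_eq_iff transpose_def)
  have Xq: "v \<bullet> (X \<omega> *v v) = f v \<omega> - expectation (f v)" for v \<omega>
    by (simp add: X_def Ef f_def matrix_vector_mult_diff_rdistrib inner_diff_right)
  have sig: "sigma_star_sq M Z \<le> \<beta>\<^sup>2"
    unfolding sigma_star_sq_def
  proof (rule cSUP_least)
    obtain u :: "real^'d" where "norm u = 1" using vector_choose_size[of 1] by auto
    then show "{u :: real^'d. norm u = 1} \<noteq> {}" by auto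
    fix u :: "real^'d" assume "u \<in> {u. norm u = 1}"
    then show "variance (\<lambda>\<omega>. u \<bullet> (Z \<omega> *v u)) \<le> \<beta>\<^sup>2" using varb[of u] by simp
  qed
  define e :: real where "e = 2 / 31"
  obtain F :: "(real^'d) set" where F: "finite F" "F \<subseteq> sphere 0 1"
      "real (card F) \<le> (1 + 2/e) ^ DIM(real^'d)" "\<forall>u\<in>sphere 0 1. \<exists>v\<in>F. dist u v \<le> e"
    proof -
    have "0 < e" unfolding e_def by simp
    from net_exists[OF this, where 'a="real^'d"] show ?thesis using that by blast
  qed
  define d where "d = real CARD('d)"
  have d1: "d \<ge> 1" unfolding d_def by simp
  define n where "n = card F"
  have ncard: "real n \<le> 32 ^ CARD('d)" using F(3) unfolding n_def e_def by simp
  have Fne: "F \<noteq> {}"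
  proof -
    obtain u :: "real^'d" where "norm u = 1" using vector_choose_size[of 1] by auto
    then have "u \<in> sphere 0 1" by simp
    then show ?thesis using F(4) by blast
  qed
  have n1: "n \<ge> 1" using Fne F(1) unfolding n_def by (simp add: Suc_leI card_gt_0_iff)
  define L where "L = ln (2 * real n)"
  have L0: "L > 0" using n1 unfolding L_def by simp
  have Lb: "L \<le> (5 * d + 1) * (3/4)"
  proof -
    have "2 * real n \<le> 2 * 32 ^ CARD('d)" using ncard by simp
    also have "\<dots> = 2 ^ (5 * CARD('d) + 1)" by (simp add: power_mult)
    finally have "L \<le> ln (2 ^ (5 * CARD('d) + 1))" unfolding L_def using n1 by simp
    also have "\<dots> = real (5 * CARD('d) + 1) * ln 2" by (rule ln_realpow)
    also have "\<dots> = (5 * d + 1) * ln 2" by (simp add: d_def)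
    also have "\<dots> \<le> (5 * d + 1) * (3/4)" using ln2 d1 by (intro mult_left_mono) auto
    finally show ?thesis .
  qed
  define Y where "Y v \<omega> = f v \<omega> - expectation (f v)" for v \<omega>
  define m where "m \<omega> = (MAX v\<in>F. \<bar>Y v \<omega>\<bar>)" for \<omega>
  have mgf: "integrable M (\<lambda>\<omega>. exp (t * Y v \<omega>)) \<and> expectation (\<lambda>\<omega>. exp (t * Y v \<omega>)) \<le> exp (t\<^sup>2 * \<beta>\<^sup>2 / 2)"
    if v: "v \<in> F" for v t
  proof -
    have G: "integrable M (\<lambda>\<omega>. exp (t * Y v \<omega>)) \<and> expectation (\<lambda>\<omega>. exp (t * Y v \<omega>)) = exp (t\<^sup>2 * variance (f v) / 2)"
      using gauss_mgf[OF assms(1) gf[of v]] unfolding Y_def by blast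
    have nv: "norm v = 1" using v F(2) by auto
    have "variance (f v) \<le> \<beta>\<^sup>2" using varb[of v] nv unfolding f_def by simp
    then have "t\<^sup>2 * variance (f v) / 2 \<le> t\<^sup>2 * \<beta>\<^sup>2 / 2" by (simp add: mult_left_mono)
    then show ?thesis using G by simp
  qed
  have intY: "integrable M (Y v)" for v
    using gauss_mgf[OF assms(1) gf[of v]] unfolding Y_def by auto
  have mint: "integrable M m"
    unfolding m_def using F(1) Fne intY by (intro integrable_MAX integrable_abs) auto
  have Em: "expectation m \<le> L / t + t * \<beta>\<^sup>2 / 2" if t: "t > 0" for t
  proof -
    define c where "c = t\<^sup>2 * \<beta>\<^sup>2 / 2"
    define a where "a = L + c"
    define g1 where "g1 v \<omega> = exp (t * Y v \<omega>)" for v \<omega>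
    define g2 where "g2 v \<omega> = exp ((-t) * Y v \<omega>)" for v \<omega>
    define S where "S \<omega> = (\<Sum>v\<in>F. g1 v \<omega> + g2 v \<omega>)" for \<omega>
    have i1: "integrable M (g1 v)" "expectation (g1 v) \<le> exp c" if "v \<in> F" for v
      using mgf[OF that, of t] unfolding g1_def c_def by auto
    have i2: "integrable M (g2 v)" "expectation (g2 v) \<le> exp c" if "v \<in> F" for v
      using mgf[OF that, of "-t"] unfolding g2_def c_def by auto
    have Sint: "integrable M S" unfolding S_def
      by (auto intro!: Bochner_Integration.integrable_sum Bochner_Integration.integrable_add i1 i2)
    have ES: "expectation S \<le> 2 * real n * exp c"
    proof -
      have "expectation S = (\<Sum>v\<in>F. expectation (\<lambda>\<omega>. g1 v \<omega> + g2 v \<omega>))"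
        unfolding S_def by (rule Bochner_Integration.integral_sum)
          (auto intro!: Bochner_Integration.integrable_add i1 i2)
      also have "\<dots> = (\<Sum>v\<in>F. expectation (g1 v) + expectation (g2 v))"
        by (rule sum.cong[OF refl], rule Bochner_Integration.integral_add) (auto intro: i1 i2)
      also have "\<dots> \<le> (\<Sum>v\<in>F. exp c + exp c)"
        by (intro sum_mono add_mono) (auto intro: i1 i2)
      also have "\<dots> = 2 * real n * exp c" by (simp add: n_def)
      finally show ?thesis .
    qed
    have pt: "t * m \<omega> \<le> (a - 1) + exp (- a) * S \<omega>" for \<omega>
    proof -
      have "m \<omega> \<in> (\<lambda>v. \<bar>Y v \<omega>\<bar>) ` F" unfolding m_def using F(1) Fne by (intro Max_in) auto
      then obtain v0 where v0: "v0 \<in> F" "m \<omega> = \<bar>Y v0 \<omega>\<bar>" by auto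
      have "exp (t * m \<omega>) \<le> g1 v0 \<omega> + g2 v0 \<omega>"
        unfolding g1_def g2_def using v0(2) exp_abs_le[of t "Y v0 \<omega>"] t by simp
      also have "\<dots> \<le> S \<omega>" unfolding S_def
        using v0(1) F(1) by (intro member_le_sum) (auto simp: g1_def g2_def intro: add_nonneg_nonneg)
      finally have ex: "exp (t * m \<omega>) \<le> S \<omega>" .
      have "t * m \<omega> - a + 1 \<le> exp (t * m \<omega> - a)" using exp_ge_add_one_self[of "t * m \<omega> - a"] by linarith
      also have "\<dots> = exp (- a) * exp (t * m \<omega>)" by (simp add: exp_add[symmetric])
      also have "\<dots> \<le> exp (- a) * S \<omega>" using ex by simp
      finally show ?thesis by simp
    qed
    have "t * expectation m = expectation (\<lambda>\<omega>. t * m \<omega>)" by simp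
    also have "\<dots> \<le> expectation (\<lambda>\<omega>. (a - 1) + exp (- a) * S \<omega>)"
      using mint Sint pt by (intro integral_mono) auto
    also have "\<dots> = (a - 1) + exp (- a) * expectation S"
      using Sint by (subst Bochner_Integration.integral_add) (auto simp: prob_space)
    also have "\<dots> \<le> (a - 1) + exp (- a) * (2 * real n * exp c)"
      using ES by simp
    also have "exp (- a) * (2 * real n * exp c) = 1"
    proof -
      have "exp a = 2 * real n * exp c" unfolding a_def L_def using n1 by (simp add: exp_add)
      then show ?thesis using n1 by (simp add: exp_minus field_simps)
    qed
    finally have "t * expectation m \<le> a" by simp
    then show ?thesis using t unfolding a_def c_def by (simp add: field_simps power2_eq_square)
  qed
  have Emb: "expectation m \<le> sqrt (2 * L * \<beta>\<^sup>2)"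
    by (rule opt_t[OF L0 _ Em]) auto
  have pw: "spec_norm (X \<omega>) \<le> m \<omega> / (1 - 2 * e)" if "\<omega> \<in> space M" for \<omega>
  proof (rule quad_net_bound[OF symX[OF that] _ _ F(4) F(2)])
    show "0 \<le> e" "e < 1/2" unfolding e_def by auto
    show "\<forall>v\<in>F. \<bar>v \<bullet> (X \<omega> *v v)\<bar> \<le> m \<omega>"
      unfolding m_def Xq Y_def[symmetric] using F(1) by auto
  qed
  have fin: "(31/27) * sqrt (2 * L * \<beta>\<^sup>2) \<le> sqrt (12 * \<beta>\<^sup>2 * d)"
  proof -
    have "(31/27) * sqrt (2 * L * \<beta>\<^sup>2) = sqrt ((31/27)\<^sup>2 * (2 * L * \<beta>\<^sup>2))"
      by (simp add: real_sqrt_mult)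
    also have "\<dots> \<le> sqrt (12 * \<beta>\<^sup>2 * d)"
    proof (rule real_sqrt_le_mono)
      have "(31/27)\<^sup>2 * (2 * L) \<le> (31/27)\<^sup>2 * (2 * ((5 * d + 1) * (3/4)))"
        using Lb by simp
      also have "\<dots> \<le> 12 * d" using d1 by (simp add: power2_eq_square)
      finally have "(31/27)\<^sup>2 * (2 * L) * \<beta>\<^sup>2 \<le> 12 * d * \<beta>\<^sup>2" by (simp add: mult_right_mono)
      then show "(31/27)\<^sup>2 * (2 * L * \<beta>\<^sup>2) \<le> 12 * \<beta>\<^sup>2 * d" by (simp add: algebra_simps)
    qed
    finally show ?thesis .
  qed
  have main: "expectation (\<lambda>\<omega>. spec_norm (X \<omega>)) \<le> sqrt (12 * \<beta>\<^sup>2 * d)"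
  proof (cases "integrable M (\<lambda>\<omega>. spec_norm (X \<omega>))")
    case True
    have "expectation (\<lambda>\<omega>. spec_norm (X \<omega>)) \<le> expectation (\<lambda>\<omega>. m \<omega> / (1 - 2 * e))"
      using True mint pw by (intro integral_mono) auto
    also have "\<dots> = (31/27) * expectation m" unfolding e_def by simp
    also have "\<dots> \<le> (31/27) * sqrt (2 * L * \<beta>\<^sup>2)" using Emb by simp
    also have "\<dots> \<le> sqrt (12 * \<beta>\<^sup>2 * d)" by (rule fin)
    finally show ?thesis .
  next
    case False
    then show ?thesis using d1 by (simp add: not_integrable_integral_eq)
  qed
  show ?thesis using main sig unfolding X_def EZ_def d_def by simp
qed


end
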